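(* Let $\omega\in\mathbb{F}_8$ be a root of $y^3+y+1$, let $m\in\mathbb{N}$, and let $L,M,N$ be nonempty subsets of $[m]$, at least one of which is a proper subset of $[m]$. Let $D=\Delta_L+\omega\Delta_M+\omega^2\Delta_N\subseteq\mathbb{F}_8^m$, $D^c=\mathbb{F}_8^m\setminus D$, and $s=|L|+|M|+|N|$. Then the binary code $C^{(2)}_{D^c}=\{((\alpha,\beta,\gamma)\cdot x)_{x\in(D^c)^{(2)}}:\alpha,\beta,\gamma\in\mathbb{F}_2^m\}$, where $(D^c)^{(2)}=\{(a,c,b)\in(\mathbb{F}_2^m)^3: a+\omega b+\omega^2c\in D^c\}$, is a $[2^{3m}-2^s,\,3m,\,2^{3m-1}-2^{s-1}]$ binary $2$-weight linear code with weight distribution: $1$ codeword of weight $0$, $2^{3m-s}(2^s-1)$ codewords of weight $2^{3m-1}-2^{s-1}$, and $2^{3m-s}-1$ codewords of weight $2^{3m-1}$. Moreover, it is a Griesmer code and hence distance optimal. Further, if $s\le 3m-2$ then $C^{(2)}_{D^c}$ is a minimal code.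
   Context: $[m]=\{1,\dots,m\}$; $\Delta_L=\{w\in\mathbb{F}_2^m:\{i:w_i\ne0\}\subseteq L\}$; $A+\omega B+\omega^2C=\{a+\omega b+\omega^2c: a\in A,b\in B,c\in C\}$. (This code is the subfield code, with respect to the basis $\{1,\omega,\omega^2\}$, of the octanary code $C_{D^c}=\{(v\cdot d)_{d\in D^c}:v\in\mathbb{F}_8^m\}$.) A $2$-weight code has exactly two distinct nonzero Hamming weights. An $[n,k,d]$ code over $\mathbb{F}_q$ is Griesmer if $\sum_{i=0}^{k-1}\lceil d/q^i\rceil=n$, distance optimal if no $[n,k,d+1]$ linear code exists, and minimal if for every nonzero codeword $c$, each nonzero codeword $c'$ with $\mathrm{Supp}(c')\subseteq\mathrm{Supp}(c)$ is a scalar multiple of $c$. *)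

theory Defs
  imports Complex_Main "HOL-Library.Z2"
begin

definition vecs :: "'i set \<Rightarrow> ('i \<Rightarrow> 'f::field) set" where
  "vecs X = {v. \<forall>x. x \<notin> X \<longrightarrow> v x = 0}"

definition supp :: "('i \<Rightarrow> 'f::field) \<Rightarrow> 'i set" where
  "supp v = {x. v x \<noteq> 0}"

definition hw :: "('i \<Rightarrow> 'f::field) \<Rightarrow> nat" where
  "hw v = card (supp v)"

definition linear_code :: "'i set \<Rightarrow> ('i \<Rightarrow> 'f::field) set \<Rightarrow> bool" where
  "linear_code X C \<longleftrightarrow> finite X \<and> C \<subseteq> vecs X \<and> (\<lambda>x. 0) \<in> C
     \<and> (\<forall>u\<in>C. \<forall>v\<in>C. (\<lambda>x. u x + v x) \<in> C)
     \<and> (\<forall>a. \<forall>u\<in>C. (\<lambda>x. a * u x) \<in> C)"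

text \<open>[n,k,d] linear code over the (finite) field F: length n = |X|, dimension k
  (a subspace of dimension k has exactly |F|^k elements), minimum distance d.\<close>
definition nkd_code :: "'i set \<Rightarrow> ('i \<Rightarrow> 'f::field) set \<Rightarrow> nat \<Rightarrow> nat \<Rightarrow> nat \<Rightarrow> bool" where
  "nkd_code X C n k d \<longleftrightarrow> linear_code X C \<and> card X = n
     \<and> card C = card (UNIV :: 'f set) ^ k
     \<and> (\<exists>c\<in>C. c \<noteq> (\<lambda>x. 0) \<and> hw c = d)
     \<and> (\<forall>c\<in>C. c \<noteq> (\<lambda>x. 0) \<longrightarrow> d \<le> hw c)"

definition two_weight_code :: "('i \<Rightarrow> 'f::field) set \<Rightarrow> bool" where
  "two_weight_code C \<longleftrightarrow> card {hw c | c. c \<in> C \<and> c \<noteq> (\<lambda>x. 0)} = 2"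

definition griesmer_code :: "'i set \<Rightarrow> ('i \<Rightarrow> 'f::field) set \<Rightarrow> bool" where
  "griesmer_code X C \<longleftrightarrow> (\<exists>n k d. nkd_code X C n k d \<and>
      (\<Sum>i<k. \<lceil>real d / real (card (UNIV :: 'f set)) ^ i\<rceil>) = int n)"

definition distance_optimal :: "'i set \<Rightarrow> ('i \<Rightarrow> 'f::field) set \<Rightarrow> bool" where
  "distance_optimal X C \<longleftrightarrow> (\<exists>n k d. nkd_code X C n k d \<and>
      \<not> (\<exists>C' :: (nat \<Rightarrow> 'f) set. nkd_code {..<n} C' n k (d + 1)))"

definition minimal_code :: "('i \<Rightarrow> 'f::field) set \<Rightarrow> bool" where
  "minimal_code C \<longleftrightarrow> (\<forall>c\<in>C. c \<noteq> (\<lambda>x. 0) \<longrightarrow>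
      (\<forall>c'\<in>C. c' \<noteq> (\<lambda>x. 0) \<and> supp c' \<subseteq> supp c \<longrightarrow> (\<exists>a. c' = (\<lambda>x. a * c x))))"

definition F2vec :: "nat \<Rightarrow> (nat \<Rightarrow> bit) set" where
  "F2vec m = {w. \<forall>i. i \<notin> {1..m} \<longrightarrow> w i = 0}"

definition Fvec :: "nat \<Rightarrow> (nat \<Rightarrow> 'a::field) set" where
  "Fvec m = {w. \<forall>i. i \<notin> {1..m} \<longrightarrow> w i = 0}"

definition Delta :: "nat \<Rightarrow> nat set \<Rightarrow> (nat \<Rightarrow> bit) set" where
  "Delta m L = {w \<in> F2vec m. {i. w i \<noteq> 0} \<subseteq> L}"

definition comb :: "'a::field \<Rightarrow> (nat \<Rightarrow> bit) \<Rightarrow> (nat \<Rightarrow> bit) \<Rightarrow> (nat \<Rightarrow> bit) \<Rightarrow> (nat \<Rightarrow> 'a)" where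
  "comb \<omega> a b c = (\<lambda>i. of_bit (a i) + \<omega> * of_bit (b i) + \<omega>^2 * of_bit (c i))"

definition Dset :: "'a::field \<Rightarrow> nat \<Rightarrow> nat set \<Rightarrow> nat set \<Rightarrow> nat set \<Rightarrow> (nat \<Rightarrow> 'a) set" where
  "Dset \<omega> m L M N = {comb \<omega> a b c | a b c. a \<in> Delta m L \<and> b \<in> Delta m M \<and> c \<in> Delta m N}"

definition Dcomp :: "'a::field \<Rightarrow> nat \<Rightarrow> nat set \<Rightarrow> nat set \<Rightarrow> nat set \<Rightarrow> (nat \<Rightarrow> 'a) set" where
  "Dcomp \<omega> m L M N = Fvec m - Dset \<omega> m L M N"

definition Dcomp2 :: "'a::field \<Rightarrow> nat \<Rightarrow> nat set \<Rightarrow> nat set \<Rightarrow> nat set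
    \<Rightarrow> ((nat \<Rightarrow> bit) \<times> (nat \<Rightarrow> bit) \<times> (nat \<Rightarrow> bit)) set" where
  "Dcomp2 \<omega> m L M N = {(a, c, b) | a b c. a \<in> F2vec m \<and> b \<in> F2vec m \<and> c \<in> F2vec m
       \<and> comb \<omega> a b c \<in> Dcomp \<omega> m L M N}"

definition dot3 :: "nat \<Rightarrow> (nat \<Rightarrow> bit) \<times> (nat \<Rightarrow> bit) \<times> (nat \<Rightarrow> bit)
    \<Rightarrow> (nat \<Rightarrow> bit) \<times> (nat \<Rightarrow> bit) \<times> (nat \<Rightarrow> bit) \<Rightarrow> bit" where
  "dot3 m u x = (case u of (\<alpha>, \<beta>, \<gamma>) \<Rightarrow> case x of (x1, x2, x3) \<Rightarrow>
      (\<Sum>i\<in>{1..m}. \<alpha> i * x1 i + \<beta> i * x2 i + \<gamma> i * x3 i))"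

definition code2 :: "'a::field \<Rightarrow> nat \<Rightarrow> nat set \<Rightarrow> nat set \<Rightarrow> nat set
    \<Rightarrow> (((nat \<Rightarrow> bit) \<times> (nat \<Rightarrow> bit) \<times> (nat \<Rightarrow> bit)) \<Rightarrow> bit) set" where
  "code2 \<omega> m L M N = {(\<lambda>x. if x \<in> Dcomp2 \<omega> m L M N then dot3 m (\<alpha>, \<beta>, \<gamma>) x else 0)
       | \<alpha> \<beta> \<gamma>. \<alpha> \<in> F2vec m \<and> \<beta> \<in> F2vec m \<and> \<gamma> \<in> F2vec m}"

end

theory Submission
  imports Defs "HOL-Library.FuncSet"
begin

declare add_bit_eq_xor[simp del] mult_bit_eq_and[simp del]


lemma char2:
  assumes "card (UNIV :: 'a::{field,finite} set) = 8"
  shows "(2::'a) = 0"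
proof -
  have bij: "bij_betw (\<lambda>x::'a. x + 1) UNIV UNIV"
    by (rule bij_betw_byWitness[where f'="\<lambda>x. x - 1"]) auto
  have "(\<Sum>x\<in>UNIV. x + (1::'a)) = (\<Sum>x\<in>UNIV. x)"
    using sum.reindex_bij_betw[OF bij, of "\<lambda>x. x"] by simp
  then have "(\<Sum>x\<in>UNIV. x) + of_nat (card (UNIV::'a set)) = (\<Sum>x\<in>UNIV. (x::'a))"
    by (simp add: sum.distrib)
  then have "(of_nat 8 :: 'a) = 0" using assms by simp
  moreover have "(2::'a)^3 = 8" by simp
  ultimately have "(2::'a)^3 = 0" by simp
  then show ?thesis using power_eq_0_iff by blast
qed

lemma bit_cases2: "(x::bit) = 0 \<or> x = 1" by (cases x) auto

lemma bit_add_self[simp]: "(x::bit) + x = 0" by (cases x) auto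

lemma of_bit_add:
  assumes "(2::'a::field) = 0"
  shows "(of_bit (x + y) :: 'a) = of_bit x + of_bit y"
  using assms by (cases x; cases y) auto

lemma indep:
  fixes \<omega> :: "'a::field"
  assumes c2: "(2::'a) = 0" and root: "\<omega>^3 + \<omega> + 1 = 0"
    and h: "of_bit p + \<omega> * of_bit q + \<omega>^2 * of_bit r = (0::'a)"
  shows "p = 0 \<and> q = 0 \<and> r = 0"
proof -
  have neg: "\<And>z::'a. - z = z" proof -
    fix z :: 'a have "z + z = 2 * z" by simp
    then have "z + z = 0" using c2 by simp
    then show "- z = z" by (metis add.inverse_unique)
  qed
  have w0: "\<omega> \<noteq> 0" using root by auto
  have w1: "\<omega> \<noteq> 1" using root c2 by (auto simp: numeral_eq_Suc)
  have w2: "\<omega>^2 \<noteq> 1"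
  proof
    assume "\<omega>^2 = 1"
    then have "\<omega>^3 = \<omega>" by (simp add: power3_eq_cube power2_eq_square)
    then show False using root c2 by simp
  qed
  have w3: "\<omega>^2 \<noteq> \<omega>"
  proof
    assume "\<omega>^2 = \<omega>" then have "\<omega> * (\<omega> - 1) = 0" by (simp add: algebra_simps power2_eq_square)
    then show False using w0 w1 by simp
  qed
  have w4: "\<omega>^2 + \<omega> + 1 \<noteq> 0"
  proof
    assume a: "\<omega>^2 + \<omega> + 1 = 0"
    have "\<omega>^3 = \<omega> * (\<omega>^2 + \<omega> + 1) - \<omega>^2 - \<omega>" by (simp add: algebra_simps power2_eq_square power3_eq_cube)
    also have "\<dots> = - (\<omega>^2) - \<omega>" using a by simp
    also have "\<dots> = \<omega>^2 + \<omega>" using neg by (metis diff_conv_add_uminus)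
    also have "\<dots> = - 1" using a by (metis add_eq_0_iff2 add.assoc)
    also have "\<dots> = 1" by (rule neg)
    finally have "\<omega>^3 = 1" .
    then have "\<omega> = 0" using root c2 by (simp add: add.assoc)
    then show False using w0 by simp
  qed
  have w5: "\<omega>^2 + 1 \<noteq> 0" using w2 neg by (metis add_eq_0_iff2)
  have w6: "\<omega>^2 + \<omega> \<noteq> 0" using w3 neg by (metis add_eq_0_iff2)
  have w7: "\<omega> + 1 \<noteq> 0" using w1 neg by (metis add_eq_0_iff2)
  show ?thesis using h w0 w2 w4 w5 w6 w7
    by (cases p; cases q; cases r) (auto simp: add.commute add.left_commute add.assoc)
qed


lemma self_add2: "(2::'a::field) = 0 \<Longrightarrow> (z::'a) + z = 0"
proof -
  assume "(2::'a) = 0"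
  moreover have "z + z = 2 * z" by simp
  ultimately show ?thesis by simp
qed

lemma bit_sum0: "(x::bit) + y = 0 \<Longrightarrow> x = y" by (cases x; cases y) auto

lemma lin_aux: "((x::'a::comm_ring_1) + x') + w*(y+y') + w^2*(z+z') = (x + w*y + w^2*z) + (x' + w*y' + w^2*z')"
  by (simp add: algebra_simps)

lemma comb_inj:
  fixes \<omega> :: "'a::field"
  assumes c2: "(2::'a) = 0" and root: "\<omega>^3 + \<omega> + 1 = 0"
    and eq: "comb \<omega> a b c = comb \<omega> a' b' c'"
  shows "a = a' \<and> b = b' \<and> c = c'"
proof -
  have "a i = a' i \<and> b i = b' i \<and> c i = c' i" for i
  proof -
    have e: "of_bit (a i) + \<omega> * of_bit (b i) + \<omega>^2 * of_bit (c i)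
       = (of_bit (a' i) + \<omega> * of_bit (b' i) + \<omega>^2 * of_bit (c' i) :: 'a)"
      using fun_cong[OF eq, of i] unfolding comb_def by simp
    have "of_bit (a i + a' i) + \<omega> * of_bit (b i + b' i) + \<omega>^2 * of_bit (c i + c' i)
       = (of_bit (a i) + \<omega> * of_bit (b i) + \<omega>^2 * of_bit (c i))
         + (of_bit (a' i) + \<omega> * of_bit (b' i) + \<omega>^2 * of_bit (c' i) :: 'a)"
      unfolding of_bit_add[OF c2] by (rule lin_aux)
    also have "\<dots> = 0" by (subst e) (rule self_add2[OF c2])
    finally have "a i + a' i = 0 \<and> b i + b' i = 0 \<and> c i + c' i = 0"
      using indep[OF c2 root] by blast
    then show ?thesis using bit_sum0 by blast
  qed
  then show ?thesis by auto
qed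

lemma mem_Dset:
  fixes \<omega> :: "'a::field"
  assumes c2: "(2::'a) = 0" and root: "\<omega>^3 + \<omega> + 1 = 0"
  shows "comb \<omega> a b c \<in> Dset \<omega> m L M N \<longleftrightarrow> a \<in> Delta m L \<and> b \<in> Delta m M \<and> c \<in> Delta m N"
  unfolding Dset_def using comb_inj[OF c2 root] by blast

lemma Delta_sub: "Delta m L \<subseteq> F2vec m" by (auto simp: Delta_def)

lemma comb_Fvec: "a \<in> F2vec m \<Longrightarrow> b \<in> F2vec m \<Longrightarrow> c \<in> F2vec m \<Longrightarrow> comb \<omega> a b c \<in> Fvec m"
  by (auto simp: F2vec_def Fvec_def comb_def)

lemma Dcomp2_eq:
  fixes \<omega> :: "'a::field"
  assumes c2: "(2::'a) = 0" and root: "\<omega>^3 + \<omega> + 1 = 0"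
  shows "Dcomp2 \<omega> m L M N = (F2vec m \<times> F2vec m \<times> F2vec m) - (Delta m L \<times> Delta m N \<times> Delta m M)"
proof -
  have "(x, y, z) \<in> Dcomp2 \<omega> m L M N \<longleftrightarrow>
     (x, y, z) \<in> (F2vec m \<times> F2vec m \<times> F2vec m) - (Delta m L \<times> Delta m N \<times> Delta m M)" for x y z
  proof -
    have "(x, y, z) \<in> Dcomp2 \<omega> m L M N \<longleftrightarrow> x \<in> F2vec m \<and> z \<in> F2vec m \<and> y \<in> F2vec m
        \<and> comb \<omega> x z y \<in> Dcomp \<omega> m L M N"
      unfolding Dcomp2_def by blast
    also have "\<dots> \<longleftrightarrow> x \<in> F2vec m \<and> z \<in> F2vec m \<and> y \<in> F2vec m
        \<and> \<not> (x \<in> Delta m L \<and> z \<in> Delta m M \<and> y \<in> Delta m N)"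
      unfolding Dcomp_def using mem_Dset[OF c2 root] comb_Fvec by blast
    finally show ?thesis by blast
  qed
  then show ?thesis by auto
qed

lemma UNIV_bit: "(UNIV :: bit set) = {0, 1}" using bit_cases2 by auto

lemma card_Delta:
  assumes "L \<subseteq> {1..m}"
  shows "finite (Delta m L) \<and> card (Delta m L) = 2 ^ card L"
proof -
  have fin: "finite L" using assms finite_subset by blast
  have D: "Delta m L = {w. \<forall>i. i \<notin> L \<longrightarrow> w i = 0}"
    using assms by (auto simp: Delta_def F2vec_def)
  have bij: "bij_betw (\<lambda>w. restrict w L) (Delta m L) (PiE L (\<lambda>_. UNIV :: bit set))"
    unfolding D
    by (rule bij_betw_byWitness[where f'="\<lambda>g i. if i \<in> L then g i else 0"])
       (auto simp: PiE_def extensional_def fun_eq_iff)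
  have finP: "finite (PiE L (\<lambda>_. UNIV :: bit set))"
    using fin by (intro finite_PiE) (auto simp: UNIV_bit)
  have cP: "card (PiE L (\<lambda>_. UNIV :: bit set)) = 2 ^ card L"
    using fin by (simp add: card_PiE UNIV_bit numeral_2_eq_2)
  show ?thesis using bij finP cP bij_betw_finite bij_betw_same_card by metis
qed


type_synonym t3 = "(nat \<Rightarrow> bit) \<times> (nat \<Rightarrow> bit) \<times> (nat \<Rightarrow> bit)"

fun add3 :: "t3 \<Rightarrow> t3 \<Rightarrow> t3" where
  "add3 (a, b, c) (a', b', c') = (\<lambda>i. a i + a' i, \<lambda>i. b i + b' i, \<lambda>i. c i + c' i)"

definition z3 :: t3 where "z3 = (\<lambda>_. 0, \<lambda>_. 0, \<lambda>_. 0)"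

definition ev :: "nat \<Rightarrow> nat \<Rightarrow> bit" where "ev i = (\<lambda>j. if j = i then 1 else 0)"

lemma Delta_add: "w \<in> Delta m L \<Longrightarrow> w' \<in> Delta m L \<Longrightarrow> (\<lambda>i. w i + w' i) \<in> Delta m L"
proof -
  assume a: "w \<in> Delta m L" "w' \<in> Delta m L"
  have "{i. w i + w' i \<noteq> 0} \<subseteq> {i. w i \<noteq> 0} \<union> {i. w' i \<noteq> 0}"
    by (auto simp del: bit_not_zero_iff)
  then show ?thesis using a by (auto simp: Delta_def F2vec_def simp del: bit_not_zero_iff)
qed

lemma Delta_zero: "(\<lambda>_. 0) \<in> Delta m L"
  by (auto simp: Delta_def F2vec_def)

lemma F2vec_Delta: "F2vec m = Delta m {1..m}"
  by (auto simp: Delta_def F2vec_def)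

lemma W_add: "x \<in> Delta m L \<times> Delta m N \<times> Delta m M \<Longrightarrow> y \<in> Delta m L \<times> Delta m N \<times> Delta m M
   \<Longrightarrow> add3 x y \<in> Delta m L \<times> Delta m N \<times> Delta m M"
  by (cases x; cases y) (auto intro: Delta_add)

lemma add3_inv: "add3 x (add3 x y) = y"
  by (cases x; cases y) (simp add: add.assoc[symmetric])

lemma add3_comm: "add3 x y = add3 y x"
  by (cases x; cases y) (simp add: add.commute)

lemma dot3_add: "dot3 m u (add3 x y) = dot3 m u x + dot3 m u y"
  by (cases u; cases x; cases y) (simp add: dot3_def algebra_simps sum.distrib)

lemma dot3_comm: "dot3 m u x = dot3 m x u"
  by (cases u; cases x) (simp add: dot3_def mult.commute)

lemma dot3_z3: "dot3 m z3 x = 0"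
  by (cases x) (simp add: dot3_def z3_def)

lemma half_count:
  fixes f :: "'v \<Rightarrow> bit"
  assumes fin: "finite S" and pp: "pp \<in> S" "f pp = 1"
    and g1: "\<And>x. x \<in> S \<Longrightarrow> g x \<in> S" and g2: "\<And>x. x \<in> S \<Longrightarrow> g (g x) = x"
    and g3: "\<And>x. x \<in> S \<Longrightarrow> f (g x) = 1 + f x"
  shows "2 * card {x\<in>S. f x = 1} = card S"
proof -
  have bij: "bij_betw g {x\<in>S. f x = 0} {x\<in>S. f x = 1}"
    by (rule bij_betw_byWitness[where f'=g]) (auto simp: g1 g2 g3)
  have "card S = card ({x\<in>S. f x = 0} \<union> {x\<in>S. f x = 1})"
    by (rule arg_cong[where f=card]) (auto intro: bit_cases2)
  also have "\<dots> = card {x\<in>S. f x = 0} + card {x\<in>S. f x = 1}"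
    using fin by (intro card_Un_disjoint) auto
  also have "card {x\<in>S. f x = 0} = card {x\<in>S. f x = 1}"
    using bij bij_betw_same_card by blast
  finally show ?thesis by simp
qed

lemma dot3_ev1: "i \<in> {1..m} \<Longrightarrow> dot3 m (\<alpha>, \<beta>, \<gamma>) (ev i, \<lambda>_. 0, \<lambda>_. 0) = \<alpha> i"
  by (simp add: dot3_def ev_def if_distrib[where f="\<lambda>x. _ * x"] cong: if_cong)
lemma dot3_ev2: "i \<in> {1..m} \<Longrightarrow> dot3 m (\<alpha>, \<beta>, \<gamma>) (\<lambda>_. 0, ev i, \<lambda>_. 0) = \<beta> i"
  by (simp add: dot3_def ev_def if_distrib[where f="\<lambda>x. _ * x"] cong: if_cong)
lemma dot3_ev3: "i \<in> {1..m} \<Longrightarrow> dot3 m (\<alpha>, \<beta>, \<gamma>) (\<lambda>_. 0, \<lambda>_. 0, ev i) = \<gamma> i"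
  by (simp add: dot3_def ev_def if_distrib[where f="\<lambda>x. _ * x"] cong: if_cong)

lemma ev_Delta: "i \<in> L \<Longrightarrow> L \<subseteq> {1..m} \<Longrightarrow> ev i \<in> Delta m L"
  by (auto simp: Delta_def F2vec_def ev_def)

lemma annih:
  assumes L: "L \<subseteq> {1..m}" and N: "N \<subseteq> {1..m}" and M: "M \<subseteq> {1..m}"
  shows "(\<forall>x\<in>Delta m L \<times> Delta m N \<times> Delta m M. dot3 m (\<alpha>, \<beta>, \<gamma>) x = 0) \<longleftrightarrow>
     (\<forall>i\<in>L. \<alpha> i = 0) \<and> (\<forall>i\<in>N. \<beta> i = 0) \<and> (\<forall>i\<in>M. \<gamma> i = 0)"
proof
  assume h: "\<forall>x\<in>Delta m L \<times> Delta m N \<times> Delta m M. dot3 m (\<alpha>, \<beta>, \<gamma>) x = 0"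
  have "\<alpha> i = 0" if "i \<in> L" for i
  proof -
    have "ev i \<in> Delta m L" "i \<in> {1..m}" using ev_Delta that L by auto
    then show ?thesis using h[rule_format, of "(ev i, \<lambda>_. 0, \<lambda>_. 0)"] dot3_ev1[of i m] Delta_zero by auto
  qed
  moreover have "\<beta> i = 0" if "i \<in> N" for i
  proof -
    have "ev i \<in> Delta m N" "i \<in> {1..m}" using ev_Delta that N by auto
    then show ?thesis using h[rule_format, of "(\<lambda>_. 0, ev i, \<lambda>_. 0)"] dot3_ev2[of i m] Delta_zero by auto
  qed
  moreover have "\<gamma> i = 0" if "i \<in> M" for i
  proof -
    have "ev i \<in> Delta m M" "i \<in> {1..m}" using ev_Delta that M by auto
    then show ?thesis using h[rule_format, of "(\<lambda>_. 0, \<lambda>_. 0, ev i)"] dot3_ev3[of i m] Delta_zero by auto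
  qed
  ultimately show "(\<forall>i\<in>L. \<alpha> i = 0) \<and> (\<forall>i\<in>N. \<beta> i = 0) \<and> (\<forall>i\<in>M. \<gamma> i = 0)" by blast
next
  assume h: "(\<forall>i\<in>L. \<alpha> i = 0) \<and> (\<forall>i\<in>N. \<beta> i = 0) \<and> (\<forall>i\<in>M. \<gamma> i = 0)"
  show "\<forall>x\<in>Delta m L \<times> Delta m N \<times> Delta m M. dot3 m (\<alpha>, \<beta>, \<gamma>) x = 0"
  proof (clarify)
    fix a c b assume a: "a \<in> Delta m L" and c: "c \<in> Delta m N" and b: "b \<in> Delta m M"
    have p1: "\<alpha> i * a i = 0" for i using h a by (cases "i \<in> L") (auto simp: Delta_def)
    have p2: "\<beta> i * c i = 0" for i using h c by (cases "i \<in> N") (auto simp: Delta_def)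
    have p3: "\<gamma> i * b i = 0" for i using h b by (cases "i \<in> M") (auto simp: Delta_def)
    have "\<alpha> i * a i + \<beta> i * c i + \<gamma> i * b i = 0" for i by (simp only: p1 p2 p3 add_0)
    then show "dot3 m (\<alpha>, \<beta>, \<gamma>) (a, c, b) = 0" by (simp add: dot3_def)
  qed
qed


lemma geo2: "(\<Sum>i<n. (2::int)^i) = 2^n - 1"
  by (induction n) auto

lemma geo2r: "(\<Sum>i<n. (2::int)^(n - Suc i)) = 2^n - 1"
proof -
  have "(\<Sum>i<n. (2::int)^(n - 1 - i)) = (\<Sum>i<n. (2::int)^(n - Suc i))" by simp
  also have "\<dots> = (\<Sum>i<n. (2::int)^i)" by (rule sum.nat_diff_reindex)
  finally show ?thesis using geo2 by simp
qed

lemma griesmer_sum: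
  assumes s1: "1 \<le> s" and sn: "s < n"
  shows "(\<Sum>i<n. \<lceil>real (2^(n-1) - 2^(s-1)) / real 2 ^ i\<rceil>) = int (2^n - 2^s)"
proof -
  have tm: "\<lceil>real (2^(n-1) - 2^(s-1)) / real 2 ^ i\<rceil>
      = 2^(n-1-i) - (if i < s then 2^(s-1-i) else 0)" if i: "i < n" for i
  proof -
    have le: "(2::nat)^(s-1) \<le> 2^(n-1)" using sn by (intro power_increasing) auto
    have r: "real (2^(n-1) - 2^(s-1)) = 2^(n-1) - 2^(s-1)" using le by (simp add: of_nat_diff)
    have p1: "(2::real)^(n-1) = 2^(n-1-i) * 2^i" using i by (simp flip: power_add)
    show ?thesis
    proof (cases "i < s")
      case True
      have p2: "(2::real)^(s-1) = 2^(s-1-i) * 2^i" using True by (simp flip: power_add)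
      have "real (2^(n-1) - 2^(s-1)) / real 2 ^ i = of_int (2^(n-1-i) - 2^(s-1-i))"
        unfolding r p1 p2 by (simp add: field_simps)
      then have "\<lceil>real (2^(n-1) - 2^(s-1)) / real 2 ^ i\<rceil> = 2^(n-1-i) - 2^(s-1-i)"
        by (metis ceiling_of_int)
      then show ?thesis using True by simp
    next
      case False
      have p2: "(2::real)^i = 2^(s-1) * 2^(i-(s-1))" using False by (simp flip: power_add)
      have pos: "(0::real) < 2^(s-1) / 2^i" by simp
      have "(1::real) < 2^(i-(s-1))" using False s1 by (intro one_less_power) auto
      then have lt: "(2::real)^(s-1) / 2^i < 1" using False p2 by (simp add: field_simps)
      have e: "real (2^(n-1) - 2^(s-1)) / real 2 ^ i = 2^(n-1-i) - 2^(s-1) / 2^i"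
        unfolding r p1 by (simp add: field_simps)
      have oi: "real_of_int ((2::int)^(n-1-i)) = (2::real)^(n-1-i)" by simp
      have "\<lceil>(2::real)^(n-1-i) - 2^(s-1) / 2^i\<rceil> = (2::int)^(n-1-i)"
      proof (rule ceiling_unique)
        show "real_of_int ((2::int)^(n-1-i)) - 1 < (2::real)^(n-1-i) - 2^(s-1) / 2^i"
          unfolding oi using lt by linarith
        show "(2::real)^(n-1-i) - 2^(s-1) / 2^i \<le> real_of_int ((2::int)^(n-1-i))"
          unfolding oi using pos by linarith
      qed
      then show ?thesis using False unfolding e by simp
    qed
  qed
  have "(\<Sum>i<n. \<lceil>real (2^(n-1) - 2^(s-1)) / real 2 ^ i\<rceil>)
      = (\<Sum>i<n. (2::int)^(n-1-i) - (if i < s then 2^(s-1-i) else 0))"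
    using tm by (intro sum.cong) auto
  also have "\<dots> = (\<Sum>i<n. (2::int)^(n-1-i)) - (\<Sum>i<n. if i < s then 2^(s-1-i) else 0)"
    by (simp add: sum_subtractf)
  also have "(\<Sum>i<n. if i < s then (2::int)^(s-1-i) else 0) = (\<Sum>i\<in>{..<n} \<inter> {i. i < s}. 2^(s-1-i))"
    by (subst sum.inter_restrict) (auto intro: sum.cong)
  also have "{..<n} \<inter> {i. i < s} = {..<s}" using sn by auto
  also have "(\<Sum>i<n. (2::int)^(n-1-i)) - (\<Sum>i<s. 2^(s-1-i)) = (2^n - 1) - (2^s - 1)"
    using geo2r[of n] geo2r[of s] by simp
  also have "\<dots> = int (2^n - 2^s)"
  proof -
    have "(2::nat)^s \<le> 2^n" using sn by (intro power_increasing) auto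
    then show ?thesis by (simp add: of_nat_diff)
  qed
  finally show ?thesis .
qed


lemma card_filter_sum: "finite A \<Longrightarrow> card {x\<in>A. P x} = (\<Sum>x\<in>A. if P x then 1 else 0)"
  using sum.inter_filter[of A "\<lambda>_. (1::nat)" P] by simp

lemma lcD: "linear_code X C \<Longrightarrow> finite X \<and> C \<subseteq> vecs X \<and> (\<lambda>x. 0) \<in> C
    \<and> (\<forall>u\<in>C. \<forall>v\<in>C. (\<lambda>x. u x + v x) \<in> C)"
  unfolding linear_code_def by (elim conjE) (intro conjI; assumption)

lemma plotkin:
  fixes C :: "('i \<Rightarrow> bit) set"
  assumes lc: "linear_code X C" and cC: "card C = 2^k"
    and wt: "\<forall>c\<in>C. c \<noteq> (\<lambda>x. 0) \<longrightarrow> d \<le> hw c"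
  shows "(card C - 1) * d * 2 \<le> card X * card C"
proof -
  from lc have finX: "finite X" and sub: "C \<subseteq> vecs X" and z: "(\<lambda>x. 0) \<in> C"
    and add: "\<forall>u\<in>C. \<forall>v\<in>C. (\<lambda>x. u x + v x) \<in> C"
    using lcD[OF lc] by blast+
  have finC: "finite C"
  proof (rule ccontr)
    assume "infinite C"
    then have "card C = 0" by (rule card.infinite)
    then show False using cC by simp
  qed
  have hwsum: "hw c = (\<Sum>x\<in>X. if c x = 1 then 1 else 0)" if "c \<in> C" for c
  proof -
    have "c \<in> vecs X" using sub that by blast
    then have hv: "\<forall>x. x \<notin> X \<longrightarrow> c x = 0" unfolding vecs_def by simp
    have "supp c = {x\<in>X. c x = 1}"
    proof (rule set_eqI)
      fix x show "x \<in> supp c \<longleftrightarrow> x \<in> {x\<in>X. c x = 1}"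
        using hv[rule_format, of x] unfolding supp_def by (cases "x \<in> X") simp_all
    qed
    then have "hw c = card {x\<in>X. c x = 1}" unfolding hw_def by simp
    also have "\<dots> = (\<Sum>x\<in>X. if c x = 1 then 1 else 0)" by (rule card_filter_sum[OF finX])
    finally show ?thesis .
  qed
  have col: "2 * card {c\<in>C. c x = 1} \<le> card C" for x
  proof (cases "\<exists>c0\<in>C. c0 x = 1")
    case True
    then obtain c0 where c0: "c0 \<in> C" "c0 x = 1" by blast
    have g1: "(\<lambda>y. c0 y + c y) \<in> C" if "c \<in> C" for c using add c0(1) that by blast
    have g2: "(\<lambda>y. c0 y + (c0 y + c y)) = c" for c :: "'i \<Rightarrow> bit"
    proof
      fix y show "c0 y + (c0 y + c y) = c y" by (cases "c0 y"; cases "c y") auto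
    qed
    have g3: "c0 x + c x = 1 + c x" for c :: "'i \<Rightarrow> bit" using c0(2) by simp
    have "2 * card {c\<in>C. c x = 1} = card C"
      apply (rule half_count[of C c0 "\<lambda>c. c x" "\<lambda>c y. c0 y + c y"])
      apply (rule finC)
      apply (rule c0(1))
      apply (rule c0(2))
      apply (erule g1)
      apply (rule g2)
      apply (rule g3)
      done
    then show ?thesis by simp
  next
    case False
    then have "{c\<in>C. c x = 1} = {}" by blast
    then show ?thesis by (metis card.empty mult_0_right zero_le)
  qed
  have cz: "card (C - {\<lambda>x. 0}) = card C - 1" using z finC by (simp add: card_Diff_singleton)
  have lb: "\<forall>c\<in>C - {\<lambda>x. 0}. d \<le> hw c" using wt by blast
  have "card (C - {\<lambda>x. 0}) * d \<le> (\<Sum>c\<in>C - {\<lambda>x. 0}. d)" by simp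
  also have "\<dots> \<le> (\<Sum>c\<in>C - {\<lambda>x. 0}. hw c)" using lb by (intro sum_mono) blast
  also have "\<dots> \<le> (\<Sum>c\<in>C. hw c)" using finC by (intro sum_mono2) auto
  also have "\<dots> = (\<Sum>c\<in>C. \<Sum>x\<in>X. if c x = 1 then 1 else 0)" using hwsum by (intro sum.cong) auto
  also have "\<dots> = (\<Sum>x\<in>X. \<Sum>c\<in>C. if c x = 1 then 1 else 0)" by (rule sum.swap)
  also have "\<dots> = (\<Sum>x\<in>X. card {c\<in>C. c x = 1})"
    by (intro sum.cong refl) (rule card_filter_sum[OF finC, symmetric])
  finally have "(card C - 1) * d \<le> (\<Sum>x\<in>X. card {c\<in>C. c x = 1})" unfolding cz .
  then have "(card C - 1) * d * 2 \<le> (\<Sum>x\<in>X. card {c\<in>C. c x = 1}) * 2" by simp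
  also have "\<dots> = (\<Sum>x\<in>X. 2 * card {c\<in>C. c x = 1})" by (subst mult.commute) (rule sum_distrib_left)
  also have "\<dots> \<le> (\<Sum>x\<in>X. card C)" using col by (intro sum_mono) auto
  also have "\<dots> = card X * card C" by simp
  finally show ?thesis .
qed

lemma minimal_bin:
  fixes C :: "('i \<Rightarrow> bit) set"
  assumes lc: "linear_code X C"
    and wt: "\<forall>c\<in>C. c \<noteq> (\<lambda>x. 0) \<longrightarrow> d \<le> hw c \<and> hw c \<le> w" and dw: "w < 2 * d"
  shows "minimal_code C"
  unfolding minimal_code_def
proof (intro ballI impI)
  from lc have finX: "finite X" and sub: "C \<subseteq> vecs X"
    and add: "\<forall>u\<in>C. \<forall>v\<in>C. (\<lambda>x. u x + v x) \<in> C"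
    using lcD[OF lc] by blast+
  fix c c' assume c: "c \<in> C" "c \<noteq> (\<lambda>x. 0)" and c': "c' \<in> C"
    and h: "c' \<noteq> (\<lambda>x. 0) \<and> supp c' \<subseteq> supp c"
  show "\<exists>a. c' = (\<lambda>x. a * c x)"
  proof (cases "c' = c")
    case True then show ?thesis by (intro exI[of _ 1]) simp
  next
    case False
    define e where "e = (\<lambda>x. c x + c' x)"
    have eC: "e \<in> C" using add c c' unfolding e_def by blast
    have e0: "e \<noteq> (\<lambda>x. 0)"
    proof
      assume "e = (\<lambda>x. 0)"
      then have "c x = c' x" for x using bit_sum0[of "c x" "c' x"] unfolding e_def by metis
      then show False using False by auto
    qed
    have pt: "c x + c' x \<noteq> 0 \<longleftrightarrow> (c x \<noteq> 0 \<and> \<not> c' x \<noteq> 0)" for x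
    proof -
      have "c' x \<noteq> 0 \<longrightarrow> c x \<noteq> 0" using h unfolding supp_def by blast
      then show ?thesis by (cases "c x"; cases "c' x") auto
    qed
    have se: "supp e = supp c - supp c'"
      unfolding e_def supp_def using pt by blast
    have "c \<in> vecs X" using sub c by blast
    then have "supp c \<subseteq> X" by (auto simp: vecs_def supp_def)
    then have finc: "finite (supp c)" using finX finite_subset by blast
    have finc': "finite (supp c')" using h finc finite_subset by blast
    have "hw e = hw c - hw c'" unfolding hw_def se using h finc' by (intro card_Diff_subset) auto
    moreover have "d \<le> hw e" using wt eC e0 by blast
    moreover have "hw c \<le> w" using wt c by blast
    moreover have "d \<le> hw c'" using wt c' h by blast
    ultimately show ?thesis using dw by linarith
  qed
qed


lemma arith_plotkin:
  assumes "1 \<le> Q" "Q < (P::nat)"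
  shows "\<not> ((2*P - 1) * (P - Q + 1) * 2 \<le> (2*P - 2*Q) * (2*P))"
proof -
  obtain q where q: "Q = Suc q" using assms(1) by (cases Q) auto
  obtain r where r: "P = Q + Suc r" using less_imp_Suc_add[OF assms(2)] by auto
  have e1: "2*P - 1 = 2*q + 2*r + 3" unfolding r q by simp
  have e2: "P - Q + 1 = r + 2" unfolding r q by simp
  have e3: "2*P - 2*Q = 2*r + 2" unfolding r q by simp
  have e4: "2*P = 2*q + 2*r + 4" unfolding r q by simp
  have l: "(2*q + 2*r + 3) * (r + 2) * 2 = 4*(q*r) + 8*q + 4*(r*r) + 14*r + 12"
    by (simp add: distrib_left distrib_right mult.commute mult.left_commute)
  have rr: "(2*r + 2) * (2*q + 2*r + 4) = 4*(q*r) + 4*(r*r) + 12*r + 4*q + 8"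
    by (simp add: distrib_left distrib_right mult.commute mult.left_commute)
  show ?thesis unfolding e1 e2 e3 unfolding e4 l rr by linarith
qed

lemma card_lt: "L \<subseteq> {1..m} \<Longrightarrow> L \<noteq> {1..m} \<Longrightarrow> card L < m"
  using psubset_card_mono[of "{1..m}" L] by auto

lemma W_card:
  assumes "L \<subseteq> {1..m}" "N \<subseteq> {1..m}" "M \<subseteq> {1..m}"
  shows "finite (Delta m L \<times> Delta m N \<times> Delta m M) \<and>
    card (Delta m L \<times> Delta m N \<times> Delta m M) = 2 ^ (card L + card N + card M)"
  using card_Delta[OF assms(1)] card_Delta[OF assms(2)] card_Delta[OF assms(3)]
  by (simp add: card_cartesian_product power_add)

lemma count_W:
  assumes "L \<subseteq> {1..m}" "N \<subseteq> {1..m}" "M \<subseteq> {1..m}"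
    and "\<not> (\<forall>x\<in>Delta m L \<times> Delta m N \<times> Delta m M. dot3 m u x = 0)"
  shows "2 * card {x\<in>Delta m L \<times> Delta m N \<times> Delta m M. dot3 m u x = 1}
      = card (Delta m L \<times> Delta m N \<times> Delta m M)"
proof -
  define S where "S = Delta m L \<times> Delta m N \<times> Delta m M"
  obtain x0 where x0: "x0 \<in> S" "dot3 m u x0 = 1"
    using assms(4) unfolding S_def by auto
  have fin: "finite S" using W_card[OF assms(1-3)] unfolding S_def by (rule conjunct1)
  have g1: "add3 x0 x \<in> S" if "x \<in> S" for x using W_add x0(1) that unfolding S_def by blast
  have g2: "add3 x0 (add3 x0 x) = x" for x by (rule add3_inv)
  have g3: "dot3 m u (add3 x0 x) = 1 + dot3 m u x" for x using dot3_add x0(2) by simp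
  have "2 * card {x\<in>S. dot3 m u x = 1} = card S"
    apply (rule half_count[of S x0 "\<lambda>x. dot3 m u x" "add3 x0"])
    apply (rule fin)
    apply (rule x0(1))
    apply (rule x0(2))
    apply (erule g1)
    apply (rule g2)
    apply (rule g3)
    done
  then show ?thesis unfolding S_def .
qed

lemma add3_z3: "add3 u z3 = u"
  by (cases u) (simp add: z3_def)

lemma Delta_mono: "L \<subseteq> L' \<Longrightarrow> Delta m L \<subseteq> Delta m L'"
  by (auto simp: Delta_def)


theorem mainTheorem10:
  fixes \<omega> :: "'a::{field, finite}" and m :: nat and L M N :: "nat set"
  assumes card8: "card (UNIV :: 'a set) = 8"
    and root: "\<omega>^3 + \<omega> + 1 = 0"
    and L: "L \<noteq> {}" "L \<subseteq> {1..m}"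
    and M: "M \<noteq> {}" "M \<subseteq> {1..m}"
    and N: "N \<noteq> {}" "N \<subseteq> {1..m}"
    and proper: "L \<noteq> {1..m} \<or> M \<noteq> {1..m} \<or> N \<noteq> {1..m}"
  defines "s \<equiv> card L + card M + card N"
    and "X \<equiv> Dcomp2 \<omega> m L M N"
    and "C \<equiv> code2 \<omega> m L M N"
  shows "nkd_code X C (2^(3*m) - 2^s) (3*m) (2^(3*m-1) - 2^(s-1))
    \<and> two_weight_code C
    \<and> card {c \<in> C. hw c = 0} = 1
    \<and> card {c \<in> C. hw c = 2^(3*m-1) - 2^(s-1)} = 2^(3*m-s) * (2^s - 1)
    \<and> card {c \<in> C. hw c = 2^(3*m-1)} = 2^(3*m-s) - 1
    \<and> griesmer_code X C
    \<and> distance_optimal X C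
    \<and> (s \<le> 3*m - 2 \<longrightarrow> minimal_code C)"
proof -
  have c2: "(2::'a) = 0" by (rule char2[OF card8])
  define n where "n = 3 * m"
  define V where "V = Delta m {1..m} \<times> Delta m {1..m} \<times> Delta m {1..m}"
  define W where "W = Delta m L \<times> Delta m N \<times> Delta m M"
  have XVW: "X = V - W"
    unfolding X_def V_def W_def Dcomp2_eq[OF c2 root] F2vec_Delta ..
  have WV: "W \<subseteq> V" unfolding V_def W_def using L M N Delta_mono by blast
  have finL: "finite L" and finM: "finite M" and finN: "finite N"
    using L M N finite_subset by blast+
  have cL: "card L \<le> m" and cM: "card M \<le> m" and cN: "card N \<le> m"
    using card_mono[OF _ L(2)] card_mono[OF _ M(2)] card_mono[OF _ N(2)] by auto
  have pL: "1 \<le> card L" and pM: "1 \<le> card M" and pN: "1 \<le> card N"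
    using L M N finL finM finN by (auto simp: Suc_le_eq card_gt_0_iff)
  have s_lt: "s < n"
  proof -
    have "card L < m \<or> card M < m \<or> card N < m"
      using proper card_lt L(2) M(2) N(2) by blast
    then show ?thesis unfolding s_def n_def using cL cM cN by linarith
  qed
  have s_ge: "3 \<le> s" unfolding s_def using pL pM pN by linarith
  have finV: "finite V" and cardV: "card V = 2^n"
    using W_card[of "{1..m}" m "{1..m}" "{1..m}"] unfolding V_def n_def by auto
  have finW: "finite W" and cardW: "card W = 2^s"
    using W_card[OF L(2) N(2) M(2)] unfolding W_def s_def by (auto simp: ac_simps)
  define cw where "cw u = (\<lambda>x. if x \<in> X then dot3 m u x else 0)" for u
  have C_eq: "C = cw ` V"
    unfolding C_def code2_def cw_def V_def X_def F2vec_Delta by auto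
  define A where "A = {u\<in>V. \<forall>x\<in>W. dot3 m u x = 0}"
  have z3V: "z3 \<in> V" unfolding V_def z3_def using Delta_zero by auto
  have z3A: "z3 \<in> A" unfolding A_def using z3V dot3_z3 by auto
  have AV: "A \<subseteq> V" unfolding A_def by auto
  have Vadd: "add3 u v \<in> V" if "u \<in> V" "v \<in> V" for u v
    using W_add that unfolding V_def by blast
  have V_full: "u = z3" if u: "u \<in> V" and h: "\<forall>x\<in>V. dot3 m u x = 0" for u
  proof -
    obtain \<alpha> \<beta> \<gamma> where u3: "u = (\<alpha>, \<beta>, \<gamma>)" by (cases u)
    have "(\<forall>i\<in>{1..m}. \<alpha> i = 0) \<and> (\<forall>i\<in>{1..m}. \<beta> i = 0) \<and> (\<forall>i\<in>{1..m}. \<gamma> i = 0)"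
      using annih[of "{1..m}" m "{1..m}" "{1..m}" \<alpha> \<beta> \<gamma>] h unfolding u3 V_def by auto
    moreover have "\<alpha> \<in> Delta m {1..m}" "\<beta> \<in> Delta m {1..m}" "\<gamma> \<in> Delta m {1..m}"
      using u unfolding u3 V_def by auto
    ultimately show ?thesis unfolding u3 z3_def
      by (auto simp: Delta_def F2vec_def fun_eq_iff)
  qed
  have pn: "(2::nat)^n = 2 * 2^(n-1)" using s_lt by (cases n) auto
  have ps: "(2::nat)^s = 2 * 2^(s-1)" using s_ge by (cases s) auto
  have psn: "(2::nat)^(s-1) < 2^(n-1)" using s_lt s_ge by (intro power_strict_increasing) auto
  define d where "d = (2::nat)^(n-1) - 2^(s-1)"
  define wm where "wm = (2::nat)^(n-1)"
  have d_pos: "0 < d" and d_wm: "d < wm" and wm_pos: "0 < wm"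
    unfolding d_def wm_def using psn by auto
  have supp_cw: "supp (cw u) = {x\<in>V. dot3 m u x = 1} - {x\<in>W. dot3 m u x = 1}" for u
    unfolding supp_def cw_def XVW using WV by auto
  have hw_cw: "hw (cw u) = card {x\<in>V. dot3 m u x = 1} - card {x\<in>W. dot3 m u x = 1}" for u
    unfolding hw_def supp_cw using WV finW by (intro card_Diff_subset) auto
  have wt: "hw (cw u) = (if u = z3 then 0 else if u \<in> A then wm else d)" if u: "u \<in> V" for u
  proof (cases "u = z3")
    case True
    then show ?thesis unfolding hw_cw using dot3_z3 by simp
  next
    case False
    have "\<not> (\<forall>x\<in>V. dot3 m u x = 0)" using V_full u False by blast
    then have "2 * card {x\<in>V. dot3 m u x = 1} = card V"
      using count_W[of "{1..m}" m "{1..m}" "{1..m}" u] unfolding V_def by auto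
    then have cv: "card {x\<in>V. dot3 m u x = 1} = wm" unfolding wm_def cardV pn by simp
    show ?thesis
    proof (cases "u \<in> A")
      case True
      then have "{x\<in>W. dot3 m u x = 1} = {}" unfolding A_def by auto
      then have "card {x\<in>W. dot3 m u x = 1} = 0" by (metis card.empty)
      then show ?thesis using True False cv unfolding hw_cw by simp
    next
      case nA: False
      then have "\<not> (\<forall>x\<in>W. dot3 m u x = 0)" unfolding A_def using u by auto
      then have "2 * card {x\<in>W. dot3 m u x = 1} = card W"
        using count_W[OF L(2) N(2) M(2), of u] unfolding W_def by auto
      then have "card {x\<in>W. dot3 m u x = 1} = 2^(s-1)" unfolding cardW ps by simp
      then show ?thesis using nA False cv unfolding hw_cw d_def wm_def by simp
    qed
  qed
  have da: "dot3 m (add3 u v) x = dot3 m u x + dot3 m v x" for u v x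
  proof -
    have "dot3 m (add3 u v) x = dot3 m x (add3 u v)" by (rule dot3_comm)
    also have "\<dots> = dot3 m x u + dot3 m x v" by (rule dot3_add)
    also have "\<dots> = dot3 m u x + dot3 m v x" using dot3_comm[of m x u] dot3_comm[of m x v] by simp
    finally show ?thesis .
  qed
  have cw_add: "cw (add3 u v) = (\<lambda>x. cw u x + cw v x)" for u v
    unfolding cw_def by (rule ext) (simp add: da)
  have cw_z3: "cw z3 = (\<lambda>x. 0)" unfolding cw_def using dot3_z3 by auto
  have hw0: "hw (\<lambda>x. 0 :: bit) = 0" by (simp add: hw_def supp_def)
  have cw0: "cw u = (\<lambda>x. 0) \<longleftrightarrow> u = z3" if "u \<in> V" for u
  proof
    assume "cw u = (\<lambda>x. 0)"
    then have "hw (cw u) = 0" using hw0 by simp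
    then show "u = z3" using wt[OF that] d_pos wm_pos by (auto split: if_splits)
  qed (simp add: cw_z3)
  have inj: "inj_on cw V"
  proof (rule inj_onI)
    fix u v assume u: "u \<in> V" and v: "v \<in> V" and e: "cw u = cw v"
    have "cw (add3 u v) = (\<lambda>x. 0)" unfolding cw_add e by simp
    then have "add3 u v = z3" using cw0 Vadd u v by blast
    then show "u = v" using add3_inv[of u v] add3_z3[of u] by simp
  qed
  have A_eq: "A = Delta m ({1..m} - L) \<times> Delta m ({1..m} - N) \<times> Delta m ({1..m} - M)"
  proof -
    have "(\<alpha>, \<beta>, \<gamma>) \<in> A \<longleftrightarrow> (\<alpha>, \<beta>, \<gamma>) \<in> Delta m ({1..m} - L) \<times> Delta m ({1..m} - N) \<times> Delta m ({1..m} - M)"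
      for \<alpha> \<beta> \<gamma>
      unfolding A_def V_def W_def using annih[OF L(2) N(2) M(2), of \<alpha> \<beta> \<gamma>]
      by (auto simp: Delta_def)
    then show ?thesis by auto
  qed
  have cardA: "card A = 2^(n-s)"
  proof -
    have "card A = 2 ^ (card ({1..m} - L) + card ({1..m} - N) + card ({1..m} - M))"
      unfolding A_eq by (rule W_card[THEN conjunct2]) auto
    also have "card ({1..m} - L) + card ({1..m} - N) + card ({1..m} - M) = n - s"
      using card_Diff_subset[OF finL L(2)] card_Diff_subset[OF finN N(2)] card_Diff_subset[OF finM M(2)]
        cL cM cN unfolding n_def s_def by simp
    finally show ?thesis .
  qed
  have pns: "(2::nat)^n = 2^(n-s) * 2^s" using s_lt by (simp flip: power_add)
  have cardVA: "card (V - A) = 2^(n-s) * (2^s - 1)"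
    using card_Diff_subset[OF finite_subset[OF AV finV] AV] cardV cardA pns
    by (simp add: diff_mult_distrib2)
  have cardAz: "card (A - {z3}) = 2^(n-s) - 1" using cardA z3A by simp
  have ns1: "1 < (2::nat)^(n-s)" using s_lt by (intro one_less_power) auto
  have s1: "1 < (2::nat)^s" using s_ge by (intro one_less_power) auto
  have VA_ne: "V - A \<noteq> {}"
  proof
    assume "V - A = {}" then have "card (V - A) = 0" by (metis card.empty)
    then show False using cardVA ns1 s1 by simp
  qed
  have Az_ne: "A - {z3} \<noteq> {}"
  proof
    assume "A - {z3} = {}" then have "card (A - {z3}) = 0" by (simp only: card.empty)
    then show False using cardAz ns1 by linarith
  qed
  have d0: "d \<noteq> 0" and wm0: "wm \<noteq> 0" and dwm: "d \<noteq> wm" using d_pos wm_pos d_wm by auto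
  have wtc: "(u = z3 \<and> hw (cw u) = 0) \<or> (u \<in> A - {z3} \<and> hw (cw u) = wm) \<or> (u \<in> V - A \<and> hw (cw u) = d)"
    if u: "u \<in> V" for u
  proof (cases "u = z3")
    case True then show ?thesis using wt[OF u] by simp
  next
    case False
    show ?thesis
    proof (cases "u \<in> A")
      case True then show ?thesis using wt[OF u] False by simp
    next
      case nA: False then show ?thesis using wt[OF u] False u by simp
    qed
  qed
  have Cd: "{c\<in>C. hw c = d} = cw ` (V - A)"
  proof
    show "{c\<in>C. hw c = d} \<subseteq> cw ` (V - A)"
    proof
      fix c assume "c \<in> {c\<in>C. hw c = d}"
      then obtain u where u: "u \<in> V" and cu: "c = cw u" and h: "hw (cw u) = d" unfolding C_eq by blast
      have "u \<in> V - A" using wtc[OF u] h d0 dwm by auto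
      then show "c \<in> cw ` (V - A)" using cu by blast
    qed
    show "cw ` (V - A) \<subseteq> {c\<in>C. hw c = d}"
    proof
      fix c assume "c \<in> cw ` (V - A)"
      then obtain u where u: "u \<in> V - A" and cu: "c = cw u" by blast
      have "hw (cw u) = d" using wtc[of u] u z3A by auto
      then show "c \<in> {c\<in>C. hw c = d}" using cu u unfolding C_eq by blast
    qed
  qed
  have Cwm: "{c\<in>C. hw c = wm} = cw ` (A - {z3})"
  proof
    show "{c\<in>C. hw c = wm} \<subseteq> cw ` (A - {z3})"
    proof
      fix c assume "c \<in> {c\<in>C. hw c = wm}"
      then obtain u where u: "u \<in> V" and cu: "c = cw u" and h: "hw (cw u) = wm" unfolding C_eq by blast
      have "u \<in> A - {z3}" using wtc[OF u] h wm0 dwm by auto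
      then show "c \<in> cw ` (A - {z3})" using cu by blast
    qed
    show "cw ` (A - {z3}) \<subseteq> {c\<in>C. hw c = wm}"
    proof
      fix c assume "c \<in> cw ` (A - {z3})"
      then obtain u where u: "u \<in> A - {z3}" and cu: "c = cw u" by blast
      have uV: "u \<in> V" using u AV by blast
      have "hw (cw u) = wm" using wtc[OF uV] u by auto
      then show "c \<in> {c\<in>C. hw c = wm}" using cu uV unfolding C_eq by blast
    qed
  qed
  have C0: "{c\<in>C. hw c = 0} = {cw z3}"
  proof
    show "{c\<in>C. hw c = 0} \<subseteq> {cw z3}"
    proof
      fix c assume "c \<in> {c\<in>C. hw c = 0}"
      then obtain u where u: "u \<in> V" and cu: "c = cw u" and h: "hw (cw u) = 0" unfolding C_eq by blast
      have "u = z3" using wtc[OF u] h wm0 d0 by auto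
      then show "c \<in> {cw z3}" using cu by blast
    qed
    have "hw (cw z3) = 0" using wtc[OF z3V] z3A by auto
    then show "{cw z3} \<subseteq> {c\<in>C. hw c = 0}" using z3V unfolding C_eq by blast
  qed
  have wtC: "hw c = d \<or> hw c = wm" if cC: "c \<in> C" and cn: "c \<noteq> (\<lambda>x. 0)" for c
  proof -
    obtain u where u: "u \<in> V" and cu: "c = cw u" using cC unfolding C_eq by blast
    have "u \<noteq> z3" using cn cu cw_z3 by blast
    then show ?thesis using wtc[OF u] cu by blast
  qed
  have cardC: "card C = 2^n" unfolding C_eq using card_image[OF inj] cardV by simp
  have cUNIV: "card (UNIV :: bit set) = 2" by (simp add: UNIV_bit)
  have lin: "linear_code X C"
    unfolding linear_code_def
  proof (intro conjI)
    show "finite X" unfolding XVW using finV by simp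
    show "C \<subseteq> vecs X" unfolding C_eq vecs_def cw_def by auto
    show "(\<lambda>x. 0) \<in> C" unfolding C_eq using cw_z3 z3V by force
    show "\<forall>u\<in>C. \<forall>v\<in>C. (\<lambda>x. u x + v x) \<in> C"
    proof (intro ballI)
      fix c c' assume c: "c \<in> C" and c': "c' \<in> C"
      obtain u where u: "u \<in> V" and cu: "c = cw u" using c unfolding C_eq by blast
      obtain v where v: "v \<in> V" and cv: "c' = cw v" using c' unfolding C_eq by blast
      have "(\<lambda>x. c x + c' x) = cw (add3 u v)" unfolding cu cv cw_add ..
      moreover have "add3 u v \<in> V" using Vadd u v by blast
      ultimately show "(\<lambda>x. c x + c' x) \<in> C" unfolding C_eq by blast
    qed
    show "\<forall>a. \<forall>u\<in>C. (\<lambda>x. a * u x) \<in> C"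
    proof (intro allI ballI)
      fix a :: bit and u assume "u \<in> C"
      then show "(\<lambda>x. a * u x) \<in> C"
        using \<open>(\<lambda>x. 0) \<in> C\<close> by (cases a) auto
    qed
  qed
  have cardX: "card X = 2^n - 2^s" unfolding XVW using card_Diff_subset[OF finW WV] cardV cardW by simp
  have nkd: "nkd_code X C (2^n - 2^s) n d"
    unfolding nkd_code_def
  proof (intro conjI)
    show "linear_code X C" by (rule lin)
    show "card X = 2^n - 2^s" by (rule cardX)
    show "card C = card (UNIV :: bit set) ^ n" using cardC cUNIV by simp
    obtain u where "u \<in> V - A" using VA_ne by blast
    then show "\<exists>c\<in>C. c \<noteq> (\<lambda>x. 0) \<and> hw c = d"
      using wt[of u] z3A d_pos unfolding C_eq by (intro bexI[of _ "cw u"]) (auto simp: hw0)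
    show "\<forall>c\<in>C. c \<noteq> (\<lambda>x. 0) \<longrightarrow> d \<le> hw c"
    proof (intro ballI impI)
      fix c assume "c \<in> C" "c \<noteq> (\<lambda>x. 0)"
      then have "hw c = d \<or> hw c = wm" by (rule wtC)
      then show "d \<le> hw c" using d_wm by auto
    qed
  qed
  have two: "two_weight_code C"
  proof -
    have "{hw c | c. c \<in> C \<and> c \<noteq> (\<lambda>x. 0)} = {d, wm}"
    proof
      show "{hw c | c. c \<in> C \<and> c \<noteq> (\<lambda>x. 0)} \<subseteq> {d, wm}"
      proof
        fix y assume "y \<in> {hw c | c. c \<in> C \<and> c \<noteq> (\<lambda>x. 0)}"
        then obtain c where "y = hw c" "c \<in> C" "c \<noteq> (\<lambda>x. 0)" by blast
        then show "y \<in> {d, wm}" using wtC by blast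
      qed
      obtain u where u: "u \<in> V - A" using VA_ne by blast
      obtain v where v: "v \<in> A - {z3}" using Az_ne by blast
      have uV: "u \<in> V" using u by blast
      have vV: "v \<in> V" using v AV by blast
      have cu: "cw u \<in> C" and cv: "cw v \<in> C" using uV vV unfolding C_eq by auto
      have hu: "hw (cw u) = d" using wtc[OF uV] u z3A by auto
      have hv: "hw (cw v) = wm" using wtc[OF vV] v by auto
      have nu: "cw u \<noteq> (\<lambda>x. 0)" using cw0[OF uV] u z3A by auto
      have nv: "cw v \<noteq> (\<lambda>x. 0)" using cw0[OF vV] v by auto
      show "{d, wm} \<subseteq> {hw c | c. c \<in> C \<and> c \<noteq> (\<lambda>x. 0)}" using cu cv hu hv nu nv by blast
    qed
    then show ?thesis unfolding two_weight_code_def using d_wm by simp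
  qed
  have c0: "card {c \<in> C. hw c = 0} = 1" unfolding C0 by simp
  have cd: "card {c \<in> C. hw c = d} = 2^(n-s) * (2^s - 1)"
    unfolding Cd using card_image[OF inj_on_subset[OF inj, of "V - A"]] cardVA by auto
  have cwm: "card {c \<in> C. hw c = wm} = 2^(n-s) - 1"
    unfolding Cwm using card_image[OF inj_on_subset[OF inj, of "A - {z3}"]] cardAz AV by auto
  have gr: "griesmer_code X C"
    unfolding griesmer_code_def
  proof (intro exI conjI)
    show "nkd_code X C (2^n - 2^s) n d" by (rule nkd)
    have "1 \<le> s" using s_ge by simp
    then show "(\<Sum>i<n. \<lceil>real d / real (card (UNIV :: bit set)) ^ i\<rceil>) = int (2^n - 2^s)"
      unfolding cUNIV d_def using griesmer_sum[of s n] s_lt by blast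
  qed
  have dopt: "distance_optimal X C"
    unfolding distance_optimal_def
  proof (intro exI conjI)
    show "nkd_code X C (2^n - 2^s) n d" by (rule nkd)
    show "\<not> (\<exists>C' :: (nat \<Rightarrow> bit) set. nkd_code {..<2^n - 2^s} C' (2^n - 2^s) n (d + 1))"
    proof
      assume "\<exists>C' :: (nat \<Rightarrow> bit) set. nkd_code {..<2^n - 2^s} C' (2^n - 2^s) n (d + 1)"
      then obtain C' :: "(nat \<Rightarrow> bit) set" where h: "nkd_code {..<2^n - 2^s} C' (2^n - 2^s) n (d + 1)"
        by blast
      then have lc: "linear_code {..<2^n - 2^s} C'" and cc: "card C' = 2^n"
        and w': "\<forall>c\<in>C'. c \<noteq> (\<lambda>x. 0) \<longrightarrow> d + 1 \<le> hw c"
        unfolding nkd_code_def using cUNIV by auto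
      have ineq: "(card C' - 1) * (d + 1) * 2 \<le> card {..<(2::nat)^n - 2^s} * card C'"
        by (rule plotkin[OF lc cc w'])
      have e4: "card C' = 2 * 2^(n-1)" using cc pn by simp
      have e2: "card {..<(2::nat)^n - 2^s} = 2 * 2^(n-1) - 2 * 2^(s-1)" using pn ps by simp
      have e3: "d + 1 = 2^(n-1) - 2^(s-1) + 1" by (simp add: d_def)
      have "(2 * 2^(n-1) - 1) * (2^(n-1) - 2^(s-1) + 1) * 2 \<le> (2 * 2^(n-1) - 2 * 2^(s-1)) * (2 * (2::nat)^(n-1))"
        using ineq by (simp only: e2 e3 e4)
      moreover have "(1::nat) \<le> 2^(s-1)" by simp
      ultimately show False using arith_plotkin[of "2^(s-1)" "2^(n-1)"] psn by blast
    qed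
  qed
  have mini: "s \<le> 3*m - 2 \<longrightarrow> minimal_code C"
  proof
    assume "s \<le> 3*m - 2"
    then have "s < n - 1" using s_lt s_ge unfolding n_def by arith
    then have "(2::nat)^s < 2^(n-1)" by (intro power_strict_increasing) auto
    then have "wm < 2 * d" unfolding wm_def d_def using pn ps psn by linarith
    moreover have "\<forall>c\<in>C. c \<noteq> (\<lambda>x. 0) \<longrightarrow> d \<le> hw c \<and> hw c \<le> wm"
    proof (intro ballI impI)
      fix c assume "c \<in> C" "c \<noteq> (\<lambda>x. 0)"
      then have "hw c = d \<or> hw c = wm" by (rule wtC)
      then show "d \<le> hw c \<and> hw c \<le> wm" using d_wm by auto
    qed
    ultimately show "minimal_code C" using minimal_bin[OF lin] by blast
  qed
  show ?thesis
    using nkd two c0 cd cwm gr dopt mini unfolding n_def d_def wm_def by simp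
qed

end
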